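(* For an integer $k\ge 2$, let $G_k$ be the graph obtained from $k$ vertex-disjoint paths $a_jb_jc_jd_je_jf_j$ ($j\in[k]$) of order $6$ and two further new vertices $x,y$ by adding the edges $xa_j$ and $yf_j$ for all $j\in[k]$. Then $G_k\in\mathcal U$ for every $k\ge 2$. (Note $G_k$ has girth $14$ and minimum degree $2$.)
   Context: All graphs are finite and simple. A set $P\subseteq V(G)$ is an open packing if no two distinct vertices of $P$ have a common neighbor; it is maximal if maximal under inclusion among open packings. $\rho^o(G)$ is the maximum size of an open packing and $\rho^o_L(G)$ the minimum size of a maximal open packing; $\mathcal U$ is the class of graphs with $\rho^o_L(G)=\rho^o(G)$. $[k]=\{1,\dots,k\}$. *)

theory Defs
  imports Main
begin

definition simple_graph :: "'a set \<Rightarrow> ('a \<Rightarrow> 'a \<Rightarrow> bool) \<Rightarrow> bool" where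
  "simple_graph V E \<longleftrightarrow> finite V \<and> (\<forall>u v. E u v \<longrightarrow> u \<in> V \<and> v \<in> V)
     \<and> (\<forall>u v. E u v \<longrightarrow> E v u) \<and> (\<forall>v. \<not> E v v)"

definition open_packing :: "'a set \<Rightarrow> ('a \<Rightarrow> 'a \<Rightarrow> bool) \<Rightarrow> 'a set \<Rightarrow> bool" where
  "open_packing V E P \<longleftrightarrow> P \<subseteq> V \<and>
     (\<forall>u\<in>P. \<forall>v\<in>P. u \<noteq> v \<longrightarrow> \<not> (\<exists>w\<in>V. E u w \<and> E v w))"

definition maximal_open_packing :: "'a set \<Rightarrow> ('a \<Rightarrow> 'a \<Rightarrow> bool) \<Rightarrow> 'a set \<Rightarrow> bool" where
  "maximal_open_packing V E P \<longleftrightarrow> open_packing V E P \<and>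
     (\<forall>Q. open_packing V E Q \<and> P \<subseteq> Q \<longrightarrow> Q = P)"

definition rho_o :: "'a set \<Rightarrow> ('a \<Rightarrow> 'a \<Rightarrow> bool) \<Rightarrow> nat" where
  "rho_o V E = Max (card ` {P. open_packing V E P})"

definition rho_oL :: "'a set \<Rightarrow> ('a \<Rightarrow> 'a \<Rightarrow> bool) \<Rightarrow> nat" where
  "rho_oL V E = Min (card ` {P. maximal_open_packing V E P})"

definition in_U :: "'a set \<Rightarrow> ('a \<Rightarrow> 'a \<Rightarrow> bool) \<Rightarrow> bool" where
  "in_U V E \<longleftrightarrow> rho_oL V E = rho_o V E"

text \<open>The graph G_k. Vertex P j i is the (i+1)-th vertex of the j-th path
  a_j b_j c_j d_j e_j f_j (i = 0..5), so a_j = P j 0 and f_j = P j 5.\<close>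
datatype vtx = X | Y | P nat nat

definition Gk_V :: "nat \<Rightarrow> vtx set" where
  "Gk_V k = {X, Y} \<union> {P j i | j i. j \<in> {1..k} \<and> i < 6}"

definition Gk_E :: "nat \<Rightarrow> vtx \<Rightarrow> vtx \<Rightarrow> bool" where
  "Gk_E k u v \<longleftrightarrow>
     (\<exists>j\<in>{1..k}.
        (u = X \<and> v = P j 0) \<or> (v = X \<and> u = P j 0) \<or>
        (u = Y \<and> v = P j 5) \<or> (v = Y \<and> u = P j 5) \<or>
        (\<exists>i<5. (u = P j i \<and> v = P j (i+1)) \<or> (v = P j i \<and> u = P j (i+1))))"

end

theory Submission
  imports Defs
begin

fun conf :: "nat \<Rightarrow> vtx \<Rightarrow> vtx \<Rightarrow> bool" where
  "conf k X (P j i) = (j \<in> {1..k} \<and> i = 1)"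
| "conf k (P j i) X = (j \<in> {1..k} \<and> i = 1)"
| "conf k Y (P j i) = (j \<in> {1..k} \<and> i = 4)"
| "conf k (P j i) Y = (j \<in> {1..k} \<and> i = 4)"
| "conf k (P j i) (P j' i') = (j \<in> {1..k} \<and> j' \<in> {1..k} \<and> i < 6 \<and> i' < 6 \<and>
     ((j = j' \<and> (i = i' + 2 \<or> i' = i + 2)) \<or> (j \<noteq> j' \<and> ((i = 0 \<and> i' = 0) \<or> (i = 5 \<and> i' = 5)))))"
| "conf k _ _ = False"

lemma V_simps[simp]: "X \<in> Gk_V k" "Y \<in> Gk_V k" "P j i \<in> Gk_V k \<longleftrightarrow> j \<in> {1..k} \<and> i < 6"
  by (auto simp: Gk_V_def)

lemma E_X[simp]: "Gk_E k u X \<longleftrightarrow> (\<exists>j\<in>{1..k}. u = P j 0)"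
  by (auto simp: Gk_E_def)
lemma E_Y[simp]: "Gk_E k u Y \<longleftrightarrow> (\<exists>j\<in>{1..k}. u = P j 5)"
  by (auto simp: Gk_E_def)
lemma E_P[simp]: "Gk_E k u (P j i) \<longleftrightarrow> j \<in> {1..k} \<and> ((i = 0 \<and> u = X) \<or> (i = 5 \<and> u = Y)
   \<or> (i < 5 \<and> u = P j (i+1)) \<or> (0 < i \<and> i \<le> 5 \<and> u = P j (i-1)))"
proof
  assume "Gk_E k u (P j i)"
  then show "j \<in> {1..k} \<and> ((i = 0 \<and> u = X) \<or> (i = 5 \<and> u = Y)
   \<or> (i < 5 \<and> u = P j (i+1)) \<or> (0 < i \<and> i \<le> 5 \<and> u = P j (i-1)))"
    unfolding Gk_E_def by (elim bexE disjE exE conjE; simp)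
next
  assume a: "j \<in> {1..k} \<and> ((i = 0 \<and> u = X) \<or> (i = 5 \<and> u = Y)
   \<or> (i < 5 \<and> u = P j (i+1)) \<or> (0 < i \<and> i \<le> 5 \<and> u = P j (i-1)))"
  then have j: "j \<in> {1..k}" by blast
  from a consider "i = 0 \<and> u = X" | "i = 5 \<and> u = Y" | "i < 5 \<and> u = P j (i+1)" | "0 < i \<and> i \<le> 5 \<and> u = P j (i-1)" by blast
  then show "Gk_E k u (P j i)"
  proof cases
    case 4
    then have "i - 1 < 5" "P j i = P j (i-1+1)" by auto
    then show ?thesis using j 4 unfolding Gk_E_def by blast
  qed (use j in \<open>auto simp: Gk_E_def\<close>)
qed

lemma conf_sym: "conf k u v \<longleftrightarrow> conf k v u"
  by (cases u; cases v; auto)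

lemma conf_irr: "\<not> conf k u u"
  by (cases u; auto)

lemma common_nb1:
  assumes "w \<in> Gk_V k" "Gk_E k u w" "Gk_E k v w" "u \<noteq> v"
  shows "conf k u v"
proof (cases w)
  case X
  then show ?thesis using assms by auto
next
  case Y
  then show ?thesis using assms by auto
next
  case (P j i)
  have j: "j \<in> {1..k}" and i: "i < 6" using assms P by auto
  have uo: "(i = 0 \<and> u = X) \<or> (i = 5 \<and> u = Y)
   \<or> (i < 5 \<and> u = P j (i+1)) \<or> (0 < i \<and> i \<le> 5 \<and> u = P j (i-1))" using assms P by simp
  have vo: "(i = 0 \<and> v = X) \<or> (i = 5 \<and> v = Y)
   \<or> (i < 5 \<and> v = P j (i+1)) \<or> (0 < i \<and> i \<le> 5 \<and> v = P j (i-1))" using assms P by simp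
  show ?thesis using uo vo j assms(4) by (elim disjE conjE; simp)
qed

lemma common_nb2:
  assumes "conf k u v"
  shows "\<exists>w\<in>Gk_V k. Gk_E k u w \<and> Gk_E k v w"
proof (cases u)
  case X
  then obtain j where "v = P j 1" "j \<in> {1..k}" using assms by (cases v) auto
  then show ?thesis using X by (intro bexI[of _ "P j 0"]) auto
next
  case Y
  then obtain j where "v = P j 4" "j \<in> {1..k}" using assms by (cases v) auto
  then show ?thesis using Y by (intro bexI[of _ "P j 5"]) auto
next
  case (P j i)
  note P1 = this
  show ?thesis
  proof (cases v)
    case X
    then show ?thesis using assms P by (intro bexI[of _ "P j 0"]) auto
  next
    case Y
    then show ?thesis using assms P by (intro bexI[of _ "P j 5"]) auto
  next
    case (P j' i')
    note P2 = this
    have c: "j \<in> {1..k}" "j' \<in> {1..k}" "i < 6" "i' < 6"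
      "(j = j' \<and> (i = i' + 2 \<or> i' = i + 2)) \<or> (j \<noteq> j' \<and> ((i = 0 \<and> i' = 0) \<or> (i = 5 \<and> i' = 5)))"
      using assms P1 P2 by auto
    from c(5) show ?thesis
    proof (elim disjE conjE)
      assume "j = j'" "i = i' + 2" then show ?thesis using P1 P2 c by (intro bexI[of _ "P j (i'+1)"]) auto
    next
      assume "j = j'" "i' = i + 2" then show ?thesis using P1 P2 c by (intro bexI[of _ "P j (i+1)"]) auto
    next
      assume "j \<noteq> j'" "i = 0" "i' = 0" then show ?thesis using P1 P2 c by (intro bexI[of _ X]) auto
    next
      assume "j \<noteq> j'" "i = 5" "i' = 5" then show ?thesis using P1 P2 c by (intro bexI[of _ Y]) auto
    qed
  qed
qed

lemma op_iff: "open_packing (Gk_V k) (Gk_E k) Q \<longleftrightarrow> Q \<subseteq> Gk_V k \<and> (\<forall>u\<in>Q. \<forall>v\<in>Q. \<not> conf k u v)"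
  unfolding open_packing_def using common_nb1 common_nb2 conf_irr by metis

definition hh :: "vtx set \<Rightarrow> vtx \<Rightarrow> nat \<times> nat" where
  "hh Q v = (case v of X \<Rightarrow> (0,0) | Y \<Rightarrow> (1,0)
     | P j i \<Rightarrow> ((i+1) mod 2, if i = 0 then (if Y \<in> Q then j else 0)
                               else if i = 5 then (if X \<in> Q then j else 0) else j))"

lemma hh_simps[simp]: "hh Q X = (0,0)" "hh Q Y = (1,0)"
  "hh Q (P j i) = ((i+1) mod 2, if i = 0 then (if Y \<in> Q then j else 0)
                               else if i = 5 then (if X \<in> Q then j else 0) else j)"
  by (simp_all add: hh_def)

lemma PP:
  assumes "i < 6" "i' < 6" "j \<in> {1..k}" "j' \<in> {1..k}" "hh Q (P j i) = hh Q (P j' i')"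
    "P j i \<noteq> P j' i'"
    "X \<in> Q \<Longrightarrow> \<not> conf k X (P j i) \<and> \<not> conf k X (P j' i')"
    "Y \<in> Q \<Longrightarrow> \<not> conf k Y (P j i) \<and> \<not> conf k Y (P j' i')"
  shows "conf k (P j i) (P j' i')"
proof -
  have hX: "X \<in> Q \<Longrightarrow> i \<noteq> 1 \<and> i' \<noteq> 1" using assms(3,4,7) by auto
  have hY: "Y \<in> Q \<Longrightarrow> i \<noteq> 4 \<and> i' \<noteq> 4" using assms(3,4,8) by auto
  have e1: "(i+1) mod 2 = (i'+1) mod 2"
    using assms(5) unfolding hh_simps prod.inject by (rule conjunct1)
  have e2: "(if i = 0 then (if Y \<in> Q then j else 0) else if i = 5 then (if X \<in> Q then j else 0) else j)
   = (if i' = 0 then (if Y \<in> Q then j' else 0) else if i' = 5 then (if X \<in> Q then j' else 0) else j')"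
    using assms(5) unfolding hh_simps prod.inject by (rule conjunct2)
  have goal: "(j = j' \<and> (i = i' + 2 \<or> i' = i + 2)) \<or> (j \<noteq> j' \<and> ((i = 0 \<and> i' = 0) \<or> (i = 5 \<and> i' = 5)))"
  proof -
  have jj: "1 \<le> j" "1 \<le> j'" using assms(3,4) by auto
  have ii: "i \<in> {0,1,2,3,4,5}" "i' \<in> {0,1,2,3,4,5}" using assms(1,2) by auto
  show ?thesis
  proof (cases "X \<in> Q"; cases "Y \<in> Q")
    assume "X \<in> Q" "Y \<in> Q"
    then show ?thesis using e1 e2 hX hY assms(6) jj ii by (elim insertE emptyE; simp)
  next
    assume "X \<in> Q" "Y \<notin> Q"
    then show ?thesis using e1 e2 hX hY assms(6) jj ii by (elim insertE emptyE; simp)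
  next
    assume "X \<notin> Q" "Y \<in> Q"
    then show ?thesis using e1 e2 hX hY assms(6) jj ii by (elim insertE emptyE; simp)
  next
    assume "X \<notin> Q" "Y \<notin> Q"
    then show ?thesis using e1 e2 hX hY assms(6) jj ii by (elim insertE emptyE; simp)
  qed
  qed
  then show ?thesis using assms(1-4) by simp
qed


lemma hh_P0:
  assumes "1 \<le> j" "i < 6" "hh Q (P j i) = (0,0)" shows "X \<notin> Q"
proof -
  have "i \<in> {0,1,2,3,4,5}" using assms(2) by auto
  then show ?thesis using assms(1,3) by (elim insertE emptyE; simp split: if_splits)
qed

lemma hh_P1:
  assumes "1 \<le> j" "i < 6" "hh Q (P j i) = (1,0)" shows "Y \<notin> Q"
proof -
  have "i \<in> {0,1,2,3,4,5}" using assms(2) by auto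
  then show ?thesis using assms(1,3) by (elim insertE emptyE; simp split: if_splits)
qed

lemma hh_inj:
  assumes "Q \<subseteq> Gk_V k" "\<forall>u\<in>Q. \<forall>v\<in>Q. \<not> conf k u v"
  shows "inj_on (hh Q) Q"
proof (rule inj_onI, rule ccontr)
  fix u v assume uv: "u \<in> Q" "v \<in> Q" "hh Q u = hh Q v" "u \<noteq> v"
  have nc: "\<not> conf k u v" "X \<in> Q \<Longrightarrow> \<not> conf k X u \<and> \<not> conf k X v"
     "Y \<in> Q \<Longrightarrow> \<not> conf k Y u \<and> \<not> conf k Y v"
    using assms(2) uv by blast+
  have uV: "u \<in> Gk_V k" and vV: "v \<in> Gk_V k" using assms(1) uv by blast+
  show False
  proof (cases u)
    case X
    note U = this
    show ?thesis
    proof (cases v)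
      case (P j i)
      then have "1 \<le> j" "i < 6" "hh Q (P j i) = (0,0)" using vV uv U by auto
      from hh_P0[OF this] show ?thesis using uv U by simp
    qed (use uv U in auto)
  next
    case Y
    note U = this
    show ?thesis
    proof (cases v)
      case (P j i)
      then have "1 \<le> j" "i < 6" using vV by auto
      moreover have "hh Q (P j i) = (1,0)" using uv U P by (metis hh_simps(2))
      ultimately have "Y \<notin> Q" by (rule hh_P1)
      then show ?thesis using uv U by simp
    qed (use uv U in auto)
  next
    case (P j i)
    note P1 = this
    show ?thesis
    proof (cases v)
      case X
      then have "1 \<le> j" "i < 6" "hh Q (P j i) = (0,0)" using uV uv P1 by auto
      from hh_P0[OF this] show ?thesis using uv X by simp
    next
      case Y
      have "1 \<le> j" "i < 6" using uV P1 by auto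
      moreover have "hh Q (P j i) = (1,0)" using uv Y P1 by (metis hh_simps(2))
      ultimately have "Y \<notin> Q" by (rule hh_P1)
      then show ?thesis using uv Y by simp
    next
      case (P j' i')
      have "i < 6" "i' < 6" "j \<in> {1..k}" "j' \<in> {1..k}" using assms(1) uv P1 P by auto
      from PP[OF this] show ?thesis using uv P1 P nc by auto
    qed
  qed
qed

lemma hh_range:
  assumes "Q \<subseteq> Gk_V k"
  shows "hh Q ` Q \<subseteq> {0..1} \<times> {0..k}"
proof
  fix z assume "z \<in> hh Q ` Q"
  then obtain v where v: "v \<in> Q" "z = hh Q v" by blast
  then have "v \<in> Gk_V k" using assms by blast
  then show "z \<in> {0..1} \<times> {0..k}" using v by (cases v) auto
qed

lemma addable:
  assumes "maximal_open_packing (Gk_V k) (Gk_E k) Q" "v \<in> Gk_V k" "v \<notin> Q"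
  shows "\<exists>u\<in>Q. conf k v u"
proof (rule ccontr)
  assume "\<not> (\<exists>u\<in>Q. conf k v u)"
  then have "\<forall>u\<in>Q. \<not> conf k v u \<and> \<not> conf k u v" using conf_sym by blast
  moreover have "open_packing (Gk_V k) (Gk_E k) Q" using assms(1) maximal_open_packing_def by blast
  ultimately have "open_packing (Gk_V k) (Gk_E k) (insert v Q)"
    using assms(2) conf_irr unfolding op_iff by blast
  then have "insert v Q = Q" using assms(1) unfolding maximal_open_packing_def by blast
  then show False using assms(3) by blast
qed

lemma hh_surj:
  assumes M: "maximal_open_packing (Gk_V k) (Gk_E k) Q"
  shows "{0..1} \<times> {0..k} \<subseteq> hh Q ` Q"
proof -
  have op: "Q \<subseteq> Gk_V k" "\<forall>u\<in>Q. \<forall>v\<in>Q. \<not> conf k u v"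
    using M unfolding maximal_open_packing_def op_iff by blast+
  have ex: "\<exists>u\<in>Q. conf k v u" if "v \<in> Gk_V k" "v \<notin> Q" for v
    using addable[OF M that] .
  have fb: "X \<in> Q \<or> P j 3 \<in> Q" if a: "j \<in> {1..k}" "P j 1 \<notin> Q" for j
  proof -
    obtain u where "u \<in> Q" "conf k (P j 1) u" using ex[of "P j 1"] a by auto
    then show ?thesis by (cases u) (auto simp: eval_nat_numeral)
  qed
  have fd: "P j 1 \<in> Q \<or> P j 5 \<in> Q" if a: "j \<in> {1..k}" "P j 3 \<notin> Q" for j
  proof -
    obtain u where "u \<in> Q" "conf k (P j 3) u" using ex[of "P j 3"] a by auto
    then show ?thesis by (cases u) (auto simp: eval_nat_numeral)
  qed
  have ff: "P j 3 \<in> Q \<or> (\<exists>j'\<in>{1..k}. P j' 5 \<in> Q)" if a: "j \<in> {1..k}" "P j 5 \<notin> Q" for j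
  proof -
    obtain u where "u \<in> Q" "conf k (P j 5) u" using ex[of "P j 5"] a by auto
    then show ?thesis by (cases u) (auto simp: eval_nat_numeral)
  qed
  have fX: "\<exists>j\<in>{1..k}. P j 1 \<in> Q" if a: "X \<notin> Q"
  proof -
    obtain u where "u \<in> Q" "conf k X u" using ex[of X] a by auto
    then show ?thesis by (cases u) (auto simp: eval_nat_numeral)
  qed
  have fe: "Y \<in> Q \<or> P j 2 \<in> Q" if a: "j \<in> {1..k}" "P j 4 \<notin> Q" for j
  proof -
    obtain u where "u \<in> Q" "conf k (P j 4) u" using ex[of "P j 4"] a by auto
    then show ?thesis by (cases u) (auto simp: eval_nat_numeral)
  qed
  have fc: "P j 4 \<in> Q \<or> P j 0 \<in> Q" if a: "j \<in> {1..k}" "P j 2 \<notin> Q" for j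
  proof -
    obtain u where "u \<in> Q" "conf k (P j 2) u" using ex[of "P j 2"] a by auto
    then show ?thesis by (cases u) (auto simp: eval_nat_numeral)
  qed
  have fa: "P j 2 \<in> Q \<or> (\<exists>j'\<in>{1..k}. P j' 0 \<in> Q)" if a: "j \<in> {1..k}" "P j 0 \<notin> Q" for j
  proof -
    obtain u where "u \<in> Q" "conf k (P j 0) u" using ex[of "P j 0"] a by auto
    then show ?thesis by (cases u) (auto simp: eval_nat_numeral)
  qed
  have fY: "\<exists>j\<in>{1..k}. P j 4 \<in> Q" if a: "Y \<notin> Q"
  proof -
    obtain u where "u \<in> Q" "conf k Y u" using ex[of Y] a by auto
    then show ?thesis by (cases u) (auto simp: eval_nat_numeral)
  qed
  have nX: "P j 1 \<notin> Q" if "X \<in> Q" "j \<in> {1..k}" for j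
    using op(2) that by fastforce
  have n13: "P j 3 \<notin> Q" if "P j 1 \<in> Q" "j \<in> {1..k}" for j
    using op(2) that by fastforce
  have nY: "P j 4 \<notin> Q" if "Y \<in> Q" "j \<in> {1..k}" for j
    using op(2) that by fastforce
  have n42: "P j 2 \<notin> Q" if "P j 4 \<in> Q" "j \<in> {1..k}" for j
    using op(2) that by fastforce
  show ?thesis
  proof
    fix z assume "z \<in> {0..1::nat} \<times> {0..k}"
    then obtain c m where z: "z = (c, m)" "c \<le> 1" "m \<le> k" by auto
    have "c = 0 \<or> c = 1" using z by auto
    moreover have "m = 0 \<or> m \<in> {1..k}" using z by auto
    ultimately consider "c = 0" "m = 0" | "c = 0" "m \<in> {1..k}" | "c = 1" "m = 0" | "c = 1" "m \<in> {1..k}"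
      by blast
    then show "z \<in> hh Q ` Q"
    proof cases
      case 1
      show ?thesis
      proof (cases "X \<in> Q")
        case True then show ?thesis using z 1 by (auto intro: image_eqI[of _ _ X])
      next
        case False
        have "\<exists>j\<in>{1..k}. P j 5 \<in> Q"
        proof (rule ccontr)
          assume nf: "\<not> (\<exists>j\<in>{1..k}. P j 5 \<in> Q)"
          then have "P j 3 \<in> Q" if "j \<in> {1..k}" for j using ff[OF that] that by blast
          then have "P j 1 \<notin> Q" if "j \<in> {1..k}" for j using n13 that by blast
          then show False using fX False by blast
        qed
        then obtain j where "j \<in> {1..k}" "P j 5 \<in> Q" by blast
        then show ?thesis using z 1 False by (auto intro: image_eqI[of _ _ "P j 5"])
      qed
    next
      case 2
      show ?thesis
      proof (cases "X \<in> Q")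
        case True
        then have "P m 1 \<notin> Q" using nX 2 by blast
        then have "P m 3 \<in> Q \<or> P m 5 \<in> Q" using fd 2 by blast
        then show ?thesis using z 2 True
          by (auto intro: image_eqI[of _ _ "P m 3"] image_eqI[of _ _ "P m 5"])
      next
        case False
        then have "P m 1 \<in> Q \<or> P m 3 \<in> Q" using fb 2 by blast
        then show ?thesis using z 2 False
          by (auto intro: image_eqI[of _ _ "P m 1"] image_eqI[of _ _ "P m 3"])
      qed
    next
      case 3
      show ?thesis
      proof (cases "Y \<in> Q")
        case True then show ?thesis using z 3 by (auto intro: image_eqI[of _ _ Y])
      next
        case False
        have "\<exists>j\<in>{1..k}. P j 0 \<in> Q"
        proof (rule ccontr)
          assume nf: "\<not> (\<exists>j\<in>{1..k}. P j 0 \<in> Q)"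
          then have "P j 2 \<in> Q" if "j \<in> {1..k}" for j using fa[OF that] that by blast
          then have "P j 4 \<notin> Q" if "j \<in> {1..k}" for j using n42 that by blast
          then show False using fY False by blast
        qed
        then obtain j where "j \<in> {1..k}" "P j 0 \<in> Q" by blast
        then show ?thesis using z 3 False by (auto intro: image_eqI[of _ _ "P j 0"])
      qed
    next
      case 4
      show ?thesis
      proof (cases "Y \<in> Q")
        case True
        then have "P m 4 \<notin> Q" using nY 4 by blast
        then have "P m 2 \<in> Q \<or> P m 0 \<in> Q" using fc 4 by blast
        then show ?thesis using z 4 True
          by (auto intro: image_eqI[of _ _ "P m 2"] image_eqI[of _ _ "P m 0"])
      next
        case False
        then have "P m 4 \<in> Q \<or> P m 2 \<in> Q" using fe 4 by blast
        then show ?thesis using z 4 False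
          by (auto intro: image_eqI[of _ _ "P m 4"] image_eqI[of _ _ "P m 2"])
      qed
    qed
  qed
qed

lemma finite_V: "finite (Gk_V k)"
proof -
  have "Gk_V k \<subseteq> {X, Y} \<union> (\<lambda>(j,i). P j i) ` ({1..k} \<times> {..<6})"
    unfolding Gk_V_def by auto
  then show ?thesis by (rule finite_subset) auto
qed

lemma card_box: "card ({0..1::nat} \<times> {0..k}) = 2 * (k + 1)"
  by (simp add: card_cartesian_product)

lemma op_card_le:
  assumes "open_packing (Gk_V k) (Gk_E k) Q"
  shows "card Q \<le> 2 * (k + 1)"
proof -
  have op: "Q \<subseteq> Gk_V k" "\<forall>u\<in>Q. \<forall>v\<in>Q. \<not> conf k u v" using assms unfolding op_iff by blast+
  have "card Q = card (hh Q ` Q)" using hh_inj[OF op] by (simp add: card_image)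
  also have "\<dots> \<le> card ({0..1::nat} \<times> {0..k})"
    using hh_range[OF op(1)] by (intro card_mono) auto
  finally show ?thesis using card_box by simp
qed

lemma max_card:
  assumes "maximal_open_packing (Gk_V k) (Gk_E k) Q"
  shows "card Q = 2 * (k + 1)"
proof -
  have o: "open_packing (Gk_V k) (Gk_E k) Q" using assms maximal_open_packing_def by blast
  then have op: "Q \<subseteq> Gk_V k" "\<forall>u\<in>Q. \<forall>v\<in>Q. \<not> conf k u v" unfolding op_iff by blast+
  have fQ: "finite Q" using op(1) finite_V finite_subset by blast
  have "card ({0..1::nat} \<times> {0..k}) \<le> card (hh Q ` Q)"
    by (rule card_mono) (use fQ hh_surj[OF assms] in auto)
  also have "\<dots> \<le> card Q" using fQ by (rule card_image_le)
  finally show ?thesis using card_box op_card_le[OF o] by simp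
qed

theorem mainTheorem16:
  fixes k :: nat
  assumes "k \<ge> 2"
  shows "in_U (Gk_V k) (Gk_E k)"
proof -
  let ?S = "{Q. open_packing (Gk_V k) (Gk_E k) Q}"
  have fS: "finite ?S"
    by (rule finite_subset[of _ "Pow (Gk_V k)"]) (auto simp: op_iff finite_V)
  have ne: "{} \<in> ?S" by (simp add: op_iff)
  have fc: "finite (card ` ?S)" using fS by blast
  have "Max (card ` ?S) \<in> card ` ?S" using fc ne by (intro Max_in) auto
  then obtain Q0 where Q0: "Q0 \<in> ?S" "card Q0 = Max (card ` ?S)" by auto
  have le: "card Q \<le> card Q0" if "Q \<in> ?S" for Q using Q0(2) fc that by simp
  have mQ0: "maximal_open_packing (Gk_V k) (Gk_E k) Q0"
    unfolding maximal_open_packing_def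
  proof (intro conjI allI impI)
    show "open_packing (Gk_V k) (Gk_E k) Q0" using Q0 by simp
    fix Q' assume a: "open_packing (Gk_V k) (Gk_E k) Q' \<and> Q0 \<subseteq> Q'"
    then have "finite Q'" using finite_V finite_subset by (auto simp: op_iff)
    moreover have "card Q' \<le> card Q0" using le a by simp
    ultimately show "Q' = Q0" using a card_subset_eq by (metis antisym card_mono)
  qed
  have c0: "card Q0 = 2 * (k + 1)" using max_card[OF mQ0] .
  have "rho_o (Gk_V k) (Gk_E k) = 2 * (k + 1)"
    unfolding rho_o_def using Q0(2) c0 by simp
  moreover have "card ` {Q. maximal_open_packing (Gk_V k) (Gk_E k) Q} = {2 * (k + 1)}"
  proof
    show "card ` {Q. maximal_open_packing (Gk_V k) (Gk_E k) Q} \<subseteq> {2 * (k + 1)}"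
      using max_card by blast
    show "{2 * (k + 1)} \<subseteq> card ` {Q. maximal_open_packing (Gk_V k) (Gk_E k) Q}"
      using mQ0 c0 by (auto intro!: image_eqI[of _ _ Q0])
  qed
  then have "rho_oL (Gk_V k) (Gk_E k) = 2 * (k + 1)"
    unfolding rho_oL_def by simp
  ultimately show ?thesis unfolding in_U_def by simp
qed

end
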